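(* For $n\ge2$, the sets $\widetilde{\mathbb G}_n$ and $\widetilde\Gamma_n$ are both starlike about $(0,\dots,0)$ but neither is circular. Consequently $\widetilde{\mathbb G}_n$ is simply connected.
   Context: $\mathbb D$ is the open unit disc. $\widetilde{\mathbb G}_n=\{(y_1,\dots,y_{n-1},q)\in\mathbb C^n: q\in\mathbb D,\ y_j=\beta_j+\bar\beta_{n-j}q$ for some $\beta_j\in\mathbb C$ with $|\beta_j|+|\beta_{n-j}|<\binom{n}{j}$, $j=1,\dots,n-1\}$; $\widetilde\Gamma_n$ is its closure. A set $S$ is starlike about $z_0\in S$ if for every $z\in S$ the segment from $z_0$ to $z$ lies in $S$. A set $S\subset\mathbb C^n$ is circular if $z\in S$ implies $e^{i\theta}z\in S$ for all $\theta\in[0,2\pi)$. *)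

theory Defs
  imports "HOL-Analysis.Analysis"
begin

text \<open>Points of C^n are encoded as functions x :: nat => complex supported on {1..n}:
  x j = y_j for 1 <= j <= n-1, and x n = q; x k = 0 for k = 0 and k > n.
  The topology is the product topology on nat => complex, whose restriction to
  this n-dimensional coordinate subspace (a closed set) is the Euclidean topology of C^n.\<close>

definition cn_points :: "nat \<Rightarrow> (nat \<Rightarrow> complex) set" where
  "cn_points n = {x. \<forall>k. (k = 0 \<or> k > n) \<longrightarrow> x k = 0}"

definition G_tilde :: "nat \<Rightarrow> (nat \<Rightarrow> complex) set" where
  "G_tilde n = {x \<in> cn_points n. norm (x n) < 1 \<and>
      (\<exists>\<beta> :: nat \<Rightarrow> complex. \<forall>j \<in> {1..n-1}.
          x j = \<beta> j + cnj (\<beta> (n - j)) * x n \<and>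
          norm (\<beta> j) + norm (\<beta> (n - j)) < real (n choose j))}"

definition Gamma_tilde :: "nat \<Rightarrow> (nat \<Rightarrow> complex) set" where
  "Gamma_tilde n = closure (G_tilde n)"

definition cn_origin :: "nat \<Rightarrow> complex" where
  "cn_origin = (\<lambda>k. 0)"

definition starlike_about :: "(nat \<Rightarrow> complex) set \<Rightarrow> (nat \<Rightarrow> complex) \<Rightarrow> bool" where
  "starlike_about S z0 \<longleftrightarrow> z0 \<in> S \<and>
     (\<forall>z \<in> S. \<forall>t::real. 0 \<le> t \<and> t \<le> 1 \<longrightarrow> (\<lambda>k. (1 - t) * z0 k + t * z k) \<in> S)"

definition circular :: "(nat \<Rightarrow> complex) set \<Rightarrow> bool" where
  "circular S \<longleftrightarrow> (\<forall>z \<in> S. \<forall>\<theta>::real. 0 \<le> \<theta> \<and> \<theta> < 2 * pi \<longrightarrow>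
       (\<lambda>k. exp (\<i> * \<theta>) * z k) \<in> S)"

end

theory Submission imports Defs begin

lemma key_bound:
  fixes u v q :: complex and t C :: real
  assumes q: "norm q < 1" and t0: "0 \<le> t" and t1: "t \<le> 1" and uv: "norm u + norm v < C"
  shows "norm ((of_real t*(u + cnj v * q) - cnj(of_real t*(v + cnj u * q)) * (of_real t*q)) / of_real (1 - norm (of_real t*q)^2))
       + norm ((of_real t*(v + cnj u * q) - cnj(of_real t*(u + cnj v * q)) * (of_real t*q)) / of_real (1 - norm (of_real t*q)^2)) < C"
proof -
  have hq: "cnj q * q = of_real (norm q ^2)"
    by (metis complex_norm_square mult.commute of_real_power)
  have hq': "q * cnj q = of_real (norm q) * of_real (norm q)"
    using complex_norm_square[of q] by (simp add: power2_eq_square)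
  have e1: "of_real t*(u + cnj v * q) - cnj(of_real t*(v + cnj u * q)) * (of_real t*q)
      = of_real (t*(1 - t*norm q^2)) * u + of_real (t*(1-t)) * (cnj v * q)"
    by (simp add: algebra_simps hq) (simp add: mult.assoc[symmetric] power2_eq_square hq')
  have e2: "of_real t*(v + cnj u * q) - cnj(of_real t*(u + cnj v * q)) * (of_real t*q)
      = of_real (t*(1 - t*norm q^2)) * v + of_real (t*(1-t)) * (cnj u * q)"
    by (simp add: algebra_simps hq) (simp add: mult.assoc[symmetric] power2_eq_square hq')
  define r where "r = norm q"
  have r0: "0 \<le> r" and r1: "r < 1" using q by (auto simp: r_def)
  have r2: "r^2 < 1" using r0 r1 by (simp add: power_less_one_iff abs_of_nonneg)
  have tr2: "t * r^2 \<le> r^2" using mult_right_mono[of t 1 "r^2"] t1 by simp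
  have A: "0 \<le> t*(1 - t*r^2)" using t0 tr2 r2 by simp
  have B: "0 \<le> t*(1-t)" using t0 t1 by simp
  have tri: "norm (of_real a * w1 + of_real b * w2) \<le> a * norm w1 + b * norm w2"
    if "a \<ge> 0" "b \<ge> 0" for a b :: real and w1 w2 :: complex
    using norm_triangle_ineq[of "of_real a * w1" "of_real b * w2"] that by (simp add: norm_mult)
  have n1: "norm (of_real (t*(1 - t*r^2)) * u + of_real (t*(1-t)) * (cnj v * q))
     \<le> t*(1 - t*r^2) * norm u + t*(1-t) * (norm v * r)"
    using tri[OF A B, of u "cnj v * q"] by (simp add: norm_mult r_def)
  have n2: "norm (of_real (t*(1 - t*r^2)) * v + of_real (t*(1-t)) * (cnj u * q))
     \<le> t*(1 - t*r^2) * norm v + t*(1-t) * (norm u * r)"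
    using tri[OF A B, of v "cnj u * q"] by (simp add: norm_mult r_def)
  define D where "D = 1 - t^2 * r^2"
  have trr: "t * r \<le> r" using mult_right_mono[of t 1 r] t1 r0 by simp
  have tr: "t * r < 1" using trr r1 by simp
  have tr0: "0 \<le> t*r" using t0 r0 by simp
  have "(t*r)*(t*r) \<le> (t*r)*1" by (rule mult_left_mono) (use tr tr0 in auto)
  then have D0: "D > 0" unfolding D_def using tr by (simp add: power2_eq_square algebra_simps)
  have nD: "norm (of_real t*q) ^2 = t^2 * r^2" using t0 by (simp add: norm_mult r_def power_mult_distrib)
  define K where "K = 1 - t*r^2 + (1-t)*r"
  have K0: "K > 0"
  proof -
    have "0 \<le> (1-t)*r" using t1 r0 by simp
    then show ?thesis using tr2 r2 by (simp add: K_def)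
  qed
  have sum: "t*(1 - t*r^2) * norm u + t*(1-t) * (norm v * r) + (t*(1 - t*r^2) * norm v + t*(1-t) * (norm u * r))
       = t * (norm u + norm v) * K" by (simp add: K_def algebra_simps)
  have tK: "t * K \<le> D"
  proof -
    have "D - t*K = (1-t)*(1-t*r)" by (simp add: D_def K_def algebra_simps power2_eq_square)
    moreover have "(1-t)*(1-t*r) \<ge> 0" using t1 tr by simp
    ultimately show ?thesis by simp
  qed
  have main: "t * (norm u + norm v) * K < C * D"
  proof (cases "t = 0")
    case True then show ?thesis using uv D0 by (simp add: D_def) (smt (verit) norm_ge_zero)
  next
    case False
    then have tp: "t > 0" using t0 by simp
    have "t * (norm u + norm v) * K = (norm u + norm v) * (t*K)" by simp
    also have "\<dots> < C * (t*K)" using tp K0 uv by simp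
    also have "\<dots> \<le> C * D" using tK uv by (intro mult_left_mono) (auto, smt (verit) norm_ge_zero)
    finally show ?thesis .
  qed
  define X1 where "X1 = of_real (t*(1 - t*r^2)) * u + of_real (t*(1-t)) * (cnj v * q)"
  define X2 where "X2 = of_real (t*(1 - t*r^2)) * v + of_real (t*(1-t)) * (cnj u * q)"
  have nd: "norm (complex_of_real (1 - norm (of_real t*q)^2)) = D"
    using D0 unfolding nD norm_of_real D_def by simp
  have "norm X1 / D + norm X2 / D = (norm X1 + norm X2) / D" by (simp add: add_divide_distrib)
  also have "\<dots> \<le> (t * (norm u + norm v) * K) / D"
    using n1 n2 sum D0 unfolding X1_def X2_def by (intro divide_right_mono) linarith+
  also have "\<dots> < C" using main D0 by (simp add: pos_divide_less_eq)
  finally have fin: "norm X1 / D + norm X2 / D < C" .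
  show ?thesis
    unfolding e1 e2 norm_divide nd using fin unfolding X1_def X2_def r_def .
qed


lemma solve_eq:
  fixes a b s :: complex
  assumes "norm s < 1"
  shows "a = (a - cnj b * s) / of_real (1 - norm s ^ 2) + cnj ((b - cnj a * s) / of_real (1 - norm s ^ 2)) * s"
proof -
  define D where "D = 1 - norm s ^ 2"
  have "norm s ^ 2 < 1" using assms by (simp add: power_less_one_iff)
  then have "D \<noteq> 0" unfolding D_def by linarith
  then have D0: "complex_of_real D \<noteq> 0" by simp
  have hs: "cnj s * s = of_real (norm s ^ 2)"
    by (metis complex_norm_square mult.commute of_real_power)
  have c: "cnj ((b - cnj a * s) / of_real D) = (cnj b - a * cnj s) / of_real D" by simp
  have "(a - cnj b * s) / of_real D + (cnj b - a * cnj s) / of_real D * s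
      = ((a - cnj b * s) + (cnj b - a * cnj s) * s) / of_real D"
    by (simp add: add_divide_distrib)
  also have "(a - cnj b * s) + (cnj b - a * cnj s) * s = a * (1 - cnj s * s)"
    by (simp add: algebra_simps)
  also have "\<dots> = a * of_real D" by (simp add: hs D_def)
  finally show ?thesis using D0 unfolding D_def[symmetric] c by simp
qed

lemma scale_G:
  assumes x: "x \<in> G_tilde n" and t0: "0 \<le> t" and t1: "t \<le> 1"
  shows "(\<lambda>k. complex_of_real t * x k) \<in> G_tilde n"
proof -
  from x obtain \<beta> where xc: "x \<in> cn_points n" and q: "norm (x n) < 1"
    and hb: "\<forall>j\<in>{1..n-1}. x j = \<beta> j + cnj (\<beta> (n-j)) * x n \<and>
          norm (\<beta> j) + norm (\<beta> (n-j)) < real (n choose j)"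
    unfolding G_tilde_def by blast
  define s where "s = complex_of_real t * x n"
  define y where "y = (\<lambda>k. complex_of_real t * x k)"
  define \<beta>' where "\<beta>' = (\<lambda>j. (y j - cnj (y (n-j)) * s) / of_real (1 - norm s ^ 2))"
  have "norm s \<le> norm (x n)" using t0 t1 mult_right_mono[of t 1 "norm (x n)"]
    by (simp add: s_def norm_mult)
  then have s1: "norm s < 1" using q by simp
  have "y \<in> cn_points n" using xc by (simp add: cn_points_def y_def)
  moreover have "norm (y n) < 1" using s1 by (simp add: y_def s_def)
  moreover have "\<forall>j\<in>{1..n-1}. y j = \<beta>' j + cnj (\<beta>' (n-j)) * y n \<and>
          norm (\<beta>' j) + norm (\<beta>' (n-j)) < real (n choose j)"
  proof
    fix j assume j: "j \<in> {1..n-1}"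
    then have nnj: "n - (n-j) = j" by auto
    have j2: "n - j \<in> {1..n-1}" using j by auto
    have eq: "y j = \<beta>' j + cnj (\<beta>' (n-j)) * y n"
      unfolding \<beta>'_def nnj using solve_eq[OF s1, of "y j" "y (n-j)"] by (simp add: y_def s_def)
    have xj: "x j = \<beta> j + cnj (\<beta> (n-j)) * x n" and bj: "norm (\<beta> j) + norm (\<beta> (n-j)) < real (n choose j)"
      using hb j by auto
    have xnj: "x (n-j) = \<beta> (n-j) + cnj (\<beta> j) * x n"
      using hb j2 nnj by auto
    have "norm (\<beta>' j) + norm (\<beta>' (n-j)) < real (n choose j)"
      using key_bound[OF q t0 t1 bj] unfolding \<beta>'_def nnj y_def s_def xj xnj .
    with eq show "y j = \<beta>' j + cnj (\<beta>' (n-j)) * y n \<and>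
          norm (\<beta>' j) + norm (\<beta>' (n-j)) < real (n choose j)" by simp
  qed
  ultimately show ?thesis unfolding G_tilde_def y_def by blast
qed


lemma coord_cont [continuous_intros]: "continuous_on S (\<lambda>x::nat \<Rightarrow> complex. x i)"
  by (rule continuous_on_subset[OF continuous_on_product_coordinates]) simp

lemma G_F:
  assumes n: "n \<ge> 2" and x: "x \<in> G_tilde n"
  shows "norm (x 1 - cnj (x (n-1)) * x n) < real n * (1 - norm (x n) ^ 2)"
proof -
  from x obtain \<beta> where q: "norm (x n) < 1"
    and hb: "\<forall>j\<in>{1..n-1}. x j = \<beta> j + cnj (\<beta> (n-j)) * x n \<and>
          norm (\<beta> j) + norm (\<beta> (n-j)) < real (n choose j)"
    unfolding G_tilde_def by blast
  have h1: "1 \<in> {1..n-1}" and h2: "n-1 \<in> {1..n-1}" using n by auto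
  have "x 1 = \<beta> 1 + cnj (\<beta> (n-1)) * x n \<and> norm (\<beta> 1) + norm (\<beta> (n-1)) < real (n choose 1)"
    using hb h1 by blast
  then have x1: "x 1 = \<beta> 1 + cnj (\<beta> (n-1)) * x n" and b1: "norm (\<beta> 1) + norm (\<beta> (n-1)) < real n"
    by auto
  have "x (n-1) = \<beta> (n-1) + cnj (\<beta> (n-(n-1))) * x n" using hb h2 by blast
  moreover have "n - (n-1) = 1" using n by simp
  ultimately have x2: "x (n-1) = \<beta> (n-1) + cnj (\<beta> 1) * x n" by simp
  have hs: "cnj (x n) * x n = of_real (norm (x n) ^ 2)"
    by (metis complex_norm_square mult.commute of_real_power)
  have "x 1 - cnj (x (n-1)) * x n = \<beta> 1 * (1 - cnj (x n) * x n)"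
    unfolding x1 x2 by (simp add: algebra_simps)
  also have "\<dots> = \<beta> 1 * of_real (1 - norm (x n) ^ 2)" by (simp add: hs)
  finally have e: "x 1 - cnj (x (n-1)) * x n = \<beta> 1 * of_real (1 - norm (x n) ^ 2)" .
  have pos: "0 < 1 - norm (x n) ^ 2" using q by (simp add: power_less_one_iff)
  have "norm (\<beta> 1) < real n" using b1 by (smt (verit) norm_ge_zero)
  then show ?thesis unfolding e norm_mult norm_of_real using pos by simp
qed

lemma closure_G_F:
  assumes n: "n \<ge> 2" and x: "x \<in> Gamma_tilde n"
  shows "norm (x 1 - cnj (x (n-1)) * x n) \<le> real n * (1 - norm (x n) ^ 2)"
proof -
  have cl: "closed {x :: nat \<Rightarrow> complex. norm (x 1 - cnj (x (n-1)) * x n) \<le> real n * (1 - norm (x n) ^ 2)}"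
    by (intro closed_Collect_le continuous_intros)
  have "G_tilde n \<subseteq> {x. norm (x 1 - cnj (x (n-1)) * x n) \<le> real n * (1 - norm (x n) ^ 2)}"
    using G_F[OF n] by (auto intro: less_imp_le)
  then have "Gamma_tilde n \<subseteq> {x. norm (x 1 - cnj (x (n-1)) * x n) \<le> real n * (1 - norm (x n) ^ 2)}"
    unfolding Gamma_tilde_def using cl by (rule closure_minimal)
  then show ?thesis using x by blast
qed

definition b0 :: "nat \<Rightarrow> nat \<Rightarrow> complex" where
  "b0 n j = (if j = 1 then complex_of_real (real n / 3) else 0)"

definition x0 :: "nat \<Rightarrow> nat \<Rightarrow> complex" where
  "x0 n k = (if 1 \<le> k \<and> k \<le> n - 1 then b0 n k + cnj (b0 n (n-k)) * (3/4)
            else if k = n then 3/4 else 0)"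

lemma x0_in:
  assumes n: "n \<ge> 2"
  shows "x0 n \<in> G_tilde n"
proof -
  have c: "\<not> (1 \<le> n \<and> n \<le> n - 1)" using n by auto
  have xn: "x0 n n = 3/4" by (simp only: x0_def c if_False if_True simp_thms)
  have "x0 n \<in> cn_points n" using n by (auto simp: cn_points_def x0_def)
  moreover have "norm (x0 n n) < 1" unfolding xn by simp
  moreover have "\<forall>j\<in>{1..n-1}. x0 n j = b0 n j + cnj (b0 n (n-j)) * x0 n n \<and>
          norm (b0 n j) + norm (b0 n (n-j)) < real (n choose j)"
  proof
    fix j assume j: "j \<in> {1..n-1}"
    have "x0 n j = b0 n j + cnj (b0 n (n-j)) * x0 n n" using j xn by (simp add: x0_def)
    moreover have "norm (b0 n j) + norm (b0 n (n-j)) < real (n choose j)"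
    proof (cases "j = 1")
      case True
      show ?thesis
      proof (cases "n - j = 1")
        case True2: True
        then have "n = 2" using \<open>j = 1\<close> by simp
        then show ?thesis using True by (simp add: b0_def)
      next
        case False
        then show ?thesis using True n by (simp add: b0_def)
      qed
    next
      case False
      show ?thesis
      proof (cases "n - j = 1")
        case True
        then have jj: "j = n - 1" using j by auto
        have "n choose (n-1) = n choose 1" using binomial_symmetric[of 1 n] n by simp
        then show ?thesis using True False n jj by (simp add: b0_def)
      next
        case False2: False
        have "j \<le> n" using j by auto
        then have "0 < n choose j" by (simp add: zero_less_binomial_iff)
        then show ?thesis using False False2 by (simp add: b0_def)
      qed
    qed
    ultimately show "x0 n j = b0 n j + cnj (b0 n (n-j)) * x0 n n \<and>
          norm (b0 n j) + norm (b0 n (n-j)) < real (n choose j)" by simp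
  qed
  ultimately show ?thesis unfolding G_tilde_def by blast
qed

lemma x0_rot_out:
  assumes n: "n \<ge> 2"
  shows "\<not> (norm ((- x0 n 1) - cnj (- x0 n (n-1)) * (- x0 n n)) \<le> real n * (1 - norm (- x0 n n) ^ 2))"
proof -
  define b where "b = (if n - 1 = 1 then real n / 3 else 0)"
  have b0: "b \<ge> 0" by (simp add: b_def)
  have bn1: "b0 n (n-1) = complex_of_real b" by (simp add: b0_def b_def)
  have nn: "n - (n-1) = 1" using n by simp
  have c: "\<not> (1 \<le> n \<and> n \<le> n - 1)" using n by auto
  have xn: "x0 n n = 3/4" by (simp only: x0_def c if_False if_True simp_thms)
  have x1: "x0 n 1 = of_real (real n / 3 + b * 3/4)" using n bn1 by (simp add: x0_def b0_def)
  have x2: "x0 n (n-1) = of_real (b + real n / 4)" using n bn1 nn by (simp add: x0_def b0_def)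
  have E: "(- x0 n 1) - cnj (- x0 n (n-1)) * (- x0 n n) = - of_real (real n / 3 + b * 3/2 + 3 * real n / 16)"
    unfolding x1 x2 xn by (simp add: algebra_simps)
  have L: "norm ((- x0 n 1) - cnj (- x0 n (n-1)) * (- x0 n n)) = real n / 3 + b * 3/2 + 3 * real n / 16"
    unfolding E norm_minus_cancel norm_of_real using b0 by simp
  have Rr: "real n * (1 - norm (- x0 n n) ^ 2) = 7 * real n / 16" unfolding norm_minus_cancel xn by (simp add: power2_eq_square)
  have "real n > 0" using n by simp
  then show ?thesis unfolding L Rr using b0 by linarith
qed


lemma loop_contract:
  assumes p: "path p" and pim: "path_image p \<subseteq> G_tilde n" and loop: "pathfinish p = pathstart p"
  shows "homotopic_loops (G_tilde n) p (\<lambda>_. cn_origin)"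
  unfolding homotopic_loops
proof (intro exI conjI)
  define h where "h = (\<lambda>z::real \<times> real. \<lambda>k. complex_of_real (1 - fst z) * p (snd z) k)"
  have pc: "continuous_on {0..1} (\<lambda>s. p s i)" for i
    using p unfolding path_def by (rule continuous_on_product_then_coordinatewise)
  show "continuous_on ({0..1::real} \<times> {0..1}) h"
    unfolding h_def
  proof (intro continuous_on_coordinatewise_then_product continuous_intros)
    fix i
    show "continuous_on ({0..1::real} \<times> {0..1}) (\<lambda>x. p (snd x) i)"
      by (rule continuous_on_compose2[OF pc[of i] continuous_on_snd]) auto
  qed
  show "h \<in> {0..1} \<times> {0..1} \<rightarrow> G_tilde n"
  proof
    fix z :: "real \<times> real" assume z: "z \<in> {0..1} \<times> {0..1}"
    then have "p (snd z) \<in> G_tilde n" using pim unfolding path_image_def by auto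
    then show "h z \<in> G_tilde n" unfolding h_def using z by (intro scale_G) auto
  qed
  show "\<forall>x\<in>{0..1}. h (0, x) = p x" by (simp add: h_def)
  show "\<forall>x\<in>{0..1}. h (1, x) = cn_origin" by (simp add: h_def cn_origin_def)
  show "\<forall>t\<in>{0..1}. pathfinish (h \<circ> Pair t) = pathstart (h \<circ> Pair t)"
    using loop by (simp add: h_def pathfinish_def pathstart_def)
qed

theorem mainTheorem6:
  fixes n :: nat
  assumes "n \<ge> 2"
  shows "starlike_about (G_tilde n) cn_origin \<and> starlike_about (Gamma_tilde n) cn_origin
    \<and> \<not> circular (G_tilde n) \<and> \<not> circular (Gamma_tilde n)
    \<and> simply_connected (G_tilde n)"
proof -
  have x0G: "x0 n \<in> G_tilde n" using x0_in[OF assms] .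
  have "(\<lambda>k. complex_of_real 0 * x0 n k) \<in> G_tilde n" by (rule scale_G[OF x0G]) auto
  then have orig: "cn_origin \<in> G_tilde n" by (simp add: cn_origin_def)
  have GC: "G_tilde n \<subseteq> Gamma_tilde n" unfolding Gamma_tilde_def by (rule closure_subset)
  have ord: "(0 \<le> complex_of_real t \<and> complex_of_real t \<le> 1) \<longleftrightarrow> (0 \<le> t \<and> t \<le> 1)" for t
    by (simp add: less_eq_complex_def)
  have seg: "(\<lambda>k. (1 - complex_of_real t) * cn_origin k + t * z k) = (\<lambda>k. complex_of_real t * z k)" for t :: real and z
    by (simp add: cn_origin_def)
  have sG: "starlike_about (G_tilde n) cn_origin"
    unfolding starlike_about_def ord using orig by (simp add: scale_G cn_origin_def)
  have scG: "(\<lambda>k. complex_of_real t * z k) \<in> Gamma_tilde n"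
    if z: "z \<in> Gamma_tilde n" and t: "0 \<le> t" "t \<le> 1" for t :: real and z
  proof -
    have cont: "continuous_on (closure (G_tilde n)) (\<lambda>z::nat\<Rightarrow>complex. \<lambda>k. complex_of_real t * z k)"
      by (intro continuous_on_coordinatewise_then_product continuous_intros)
    have "(\<lambda>z::nat\<Rightarrow>complex. \<lambda>k. complex_of_real t * z k) ` G_tilde n \<subseteq> closure (G_tilde n)"
      using scale_G[OF _ t] closure_subset by blast
    from image_closure_subset[OF cont closed_closure this]
    show ?thesis using z unfolding Gamma_tilde_def by blast
  qed
  have sGa: "starlike_about (Gamma_tilde n) cn_origin"
    unfolding starlike_about_def ord using orig GC by (auto simp: scG cn_origin_def)
  have rot: "(\<lambda>k. exp (\<i> * complex_of_real pi) * x0 n k) = (\<lambda>k. - x0 n k)" by simp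
  have notF: "(\<lambda>k. - x0 n k) \<notin> Gamma_tilde n"
  proof
    assume "(\<lambda>k. - x0 n k) \<in> Gamma_tilde n"
    from closure_G_F[OF assms this] x0_rot_out[OF assms] show False by simp
  qed
  have pi0: "0 \<le> pi \<and> pi < 2 * pi" using pi_gt_zero by linarith
  have ncG: "\<not> circular (G_tilde n)"
  proof
    assume "circular (G_tilde n)"
    then have "(\<lambda>k. exp (\<i> * complex_of_real pi) * x0 n k) \<in> G_tilde n"
      unfolding circular_def using x0G pi0 by blast
    then show False using notF GC unfolding rot by blast
  qed
  have ncGa: "\<not> circular (Gamma_tilde n)"
  proof
    assume "circular (Gamma_tilde n)"
    then have "(\<lambda>k. exp (\<i> * complex_of_real pi) * x0 n k) \<in> Gamma_tilde n"
      unfolding circular_def using x0G GC pi0 by blast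
    then show False using notF unfolding rot by blast
  qed
  have sc: "simply_connected (G_tilde n)"
    unfolding simply_connected_def
    by (meson loop_contract homotopic_loops_trans homotopic_loops_sym)
  show ?thesis using sG sGa ncG ncGa sc by blast
qed

end
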